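(* Let $\hat U_i=\mathrm{sign}(Y_i-\hat Q(X_i))$. Then $$\hat\psi_{\mathrm T}^+\le\frac{\mathbb P_n(Y-\hat Q(X))Z\big(1+\Lambda^{\hat U}(1-\hat e(X))/\hat e(X)\big)+\mathbb P_n\hat Q(X)Z/\hat e(X)}{\mathbb P_nZ/\hat e(X)}.$$
   Context: Data $(X_i,Y_i,Z_i)_{i\le n}$; $\mathbb P_n f=\frac1n\sum_if(X_i,Y_i,Z_i)$; $\Lambda\ge1$, $\tau=\Lambda/(\Lambda+1)$; $\hat e(X_i)\in(0,1)$ for all $i$; $\hat Q:\mathcal X\to\mathbb R$ is an estimate of the conditional $\tau$-quantile of $Y$ given $X$ and $Z=1$; $\mathrm{sign}(0)=0$. $\mathcal E_n(\Lambda)=\{\bar e\in\mathbb R^n:\Lambda^{-1}\le\frac{\bar e_i/(1-\bar e_i)}{\hat e(X_i)/(1-\hat e(X_i))}\le\Lambda\ \forall i\}$, and $\hat\psi_{\mathrm T}^+=\max_{\bar e\in\mathcal E_n(\Lambda)}\frac{\sum_iY_iZ_i/\bar e_i}{\sum_iZ_i/\bar e_i}$ subject to $\frac1n\sum_i\hat Q(X_i)Z_i/\bar e_i=\frac1n\sum_i\hat Q(X_i)Z_i/\hat e(X_i)$ and $\frac1n\sum_iZ_i/\bar e_i=\frac1n\sum_iZ_i/\hat e(X_i)$. *)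

theory Defs
  imports Complex_Main
begin

definition Pn :: "nat \<Rightarrow> (nat \<Rightarrow> real) \<Rightarrow> real" where
  "Pn n f = (\<Sum>i<n. f i) / real n"

definition En :: "nat \<Rightarrow> real \<Rightarrow> (nat \<Rightarrow> real) \<Rightarrow> (nat \<Rightarrow> real) set" where
  "En n Lam eh = {eb. \<forall>i<n.
      inverse Lam \<le> (eb i / (1 - eb i)) / (eh i / (1 - eh i)) \<and>
      (eb i / (1 - eb i)) / (eh i / (1 - eh i)) \<le> Lam}"

text \<open>Feasible set of the optimisation problem defining psi_T^+ (eh i = ehat(X_i), q i = Qhat(X_i)).\<close>
definition feasT :: "nat \<Rightarrow> real \<Rightarrow> (nat \<Rightarrow> real) \<Rightarrow> (nat \<Rightarrow> real) \<Rightarrow> (nat \<Rightarrow> real)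
    \<Rightarrow> (nat \<Rightarrow> real) set" where
  "feasT n Lam eh q Z = {eb \<in> En n Lam eh.
      Pn n (\<lambda>i. q i * Z i / eb i) = Pn n (\<lambda>i. q i * Z i / eh i) \<and>
      Pn n (\<lambda>i. Z i / eb i) = Pn n (\<lambda>i. Z i / eh i)}"

definition psiT_plus :: "nat \<Rightarrow> real \<Rightarrow> (nat \<Rightarrow> real) \<Rightarrow> (nat \<Rightarrow> real) \<Rightarrow> (nat \<Rightarrow> real)
    \<Rightarrow> (nat \<Rightarrow> real) \<Rightarrow> real" where
  "psiT_plus n Lam eh q Y Z =
     Sup ((\<lambda>eb. (\<Sum>i<n. Y i * Z i / eb i) / (\<Sum>i<n. Z i / eb i)) ` feasT n Lam eh q Z)"

end

theory Submission
  imports Defs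
begin

lemma term_bound:
  fixes b e y q z Lam :: real
  assumes L: "Lam \<ge> 1" and e0: "0 < e" and e1: "e < 1" and z: "z = 0 \<or> z = 1"
    and r1: "inverse Lam \<le> (b / (1 - b)) / (e / (1 - e))"
    and r2: "(b / (1 - b)) / (e / (1 - e)) \<le> Lam"
  shows "(y - q) * z / b \<le> (y - q) * z * (1 + Lam powr (sgn (y - q)) * (1 - e) / e)"
proof -
  define r where "r = (b / (1 - b)) / (e / (1 - e))"
  have Lp: "0 < Lam" using L by simp
  have rpos: "0 < r" using r1 Lp unfolding r_def
    by (metis inverse_positive_iff_positive order_less_le_trans)
  have oe: "0 < e / (1 - e)" using e0 e1 by simp
  have gen: "\<And>x c::real. c \<noteq> 0 \<Longrightarrow> x = (x / c) * c" by simp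
  have "b / (1 - b) = r * (e / (1 - e))" unfolding r_def by (rule gen) (use oe in linarith)
  then have ob: "0 < b / (1 - b)" using mult_pos_pos[OF rpos oe] by linarith
  have "0 < b \<and> 0 < 1 - b \<or> b < 0 \<and> 1 - b < 0"
    using ob by (simp only: zero_less_divide_iff)
  then have b01: "0 < b \<and> b < 1" by linarith
  have inv_b: "1 / b = 1 + ((1 - e) / e) / r"
    using b01 e0 e1 unfolding r_def by (simp add: field_simps)
  have c0: "0 < (1 - e) / e" using e0 e1 by simp
  have up: "1 / b \<le> 1 + Lam * ((1 - e) / e)"
  proof -
    have "((1 - e) / e) / r \<le> ((1 - e) / e) / inverse Lam"
      using r1 rpos c0 Lp unfolding r_def[symmetric]
      by (intro divide_left_mono) auto
    then show ?thesis using inv_b Lp by (simp add: field_simps)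
  qed
  have lo: "1 + (1 / Lam) * ((1 - e) / e) \<le> 1 / b"
  proof -
    have "((1 - e) / e) / Lam \<le> ((1 - e) / e) / r"
      using r2 rpos c0 Lp unfolding r_def[symmetric]
      by (intro divide_left_mono) auto
    moreover have "(1 / Lam) * ((1 - e) / e) = ((1 - e) / e) / Lam" by simp
    ultimately show ?thesis using inv_b by linarith
  qed
  consider "y - q > 0" | "y - q = 0" | "y - q < 0" by linarith
  then show ?thesis
  proof cases
    case 1
    then have "sgn (y - q) = 1" by simp
    then have p: "Lam powr (sgn (y - q)) = Lam" using Lp by simp
    have zz: "0 \<le> (y - q) * z" using 1 z by auto
    have "(y - q) * z / b = (y - q) * z * (1 / b)" by simp
    also have "\<dots> \<le> (y - q) * z * (1 + Lam * ((1 - e) / e))"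
      using up zz by (intro mult_left_mono) auto
    finally show ?thesis using p by simp
  next
    case 2 then show ?thesis by simp
  next
    case 3
    then have "sgn (y - q) = -1" by simp
    then have p: "Lam powr (sgn (y - q)) = 1 / Lam" using Lp by (simp add: powr_minus divide_inverse)
    have zz: "(y - q) * z \<le> 0" using 3 z by auto
    have "(y - q) * z / b = (y - q) * z * (1 / b)" by simp
    also have "\<dots> \<le> (y - q) * z * (1 + (1 / Lam) * ((1 - e) / e))"
      using lo zz by (intro mult_left_mono_neg) auto
    finally show ?thesis using p by simp
  qed
qed

theorem lemma2:
  fixes n :: nat and X :: "nat \<Rightarrow> 'x" and Y Z :: "nat \<Rightarrow> real"
    and ehat Qhat :: "'x \<Rightarrow> real" and Lam :: real
  assumes "Lam \<ge> 1"
    and "\<forall>i<n. 0 < ehat (X i) \<and> ehat (X i) < 1"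
    and "\<forall>i<n. Z i = 0 \<or> Z i = 1"
  shows "psiT_plus n Lam (\<lambda>i. ehat (X i)) (\<lambda>i. Qhat (X i)) Y Z
    \<le> (Pn n (\<lambda>i. (Y i - Qhat (X i)) * Z i *
            (1 + Lam powr (sgn (Y i - Qhat (X i))) * (1 - ehat (X i)) / ehat (X i)))
        + Pn n (\<lambda>i. Qhat (X i) * Z i / ehat (X i)))
       / Pn n (\<lambda>i. Z i / ehat (X i))"
proof -
  define e where "e = (\<lambda>i. ehat (X i))"
  define q where "q = (\<lambda>i. Qhat (X i))"
  define A where "A = (\<Sum>i<n. (Y i - q i) * Z i * (1 + Lam powr (sgn (Y i - q i)) * (1 - e i) / e i))"
  define B where "B = (\<Sum>i<n. q i * Z i / e i)"
  define S where "S = (\<Sum>i<n. Z i / e i)"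
  have RHS: "(Pn n (\<lambda>i. (Y i - Qhat (X i)) * Z i *
            (1 + Lam powr (sgn (Y i - Qhat (X i))) * (1 - ehat (X i)) / ehat (X i)))
        + Pn n (\<lambda>i. Qhat (X i) * Z i / ehat (X i)))
       / Pn n (\<lambda>i. Z i / ehat (X i)) = (A / n + B / n) / (S / n)"
    unfolding Pn_def A_def B_def S_def e_def q_def by simp
  have Lp: "0 < Lam" using assms(1) by simp
  have ne: "e \<in> feasT n Lam e q Z"
  proof -
    have "\<forall>i<n. (e i / (1 - e i)) / (e i / (1 - e i)) = 1"
      using assms(2) unfolding e_def by auto
    moreover have "inverse Lam \<le> 1" using le_imp_inverse_le[of 1 Lam] assms(1) by simp
    ultimately show ?thesis unfolding feasT_def En_def using assms(1) by auto
  qed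
  have S0: "0 \<le> S" unfolding S_def using assms(2,3) unfolding e_def
    by (intro sum_nonneg) (metis divide_nonneg_pos order_refl zero_le_one lessThan_iff)
  have bound: "(\<Sum>i<n. Y i * Z i / eb i) / (\<Sum>i<n. Z i / eb i) \<le> (A / n + B / n) / (S / n)"
    if eb: "eb \<in> feasT n Lam e q Z" for eb
  proof (cases "n = 0")
    case True then show ?thesis by simp
  next
    case False
    have c1: "(\<Sum>i<n. q i * Z i / eb i) = B"
      using eb False unfolding feasT_def Pn_def B_def by auto
    have c2: "(\<Sum>i<n. Z i / eb i) = S"
      using eb False unfolding feasT_def Pn_def S_def by auto
    have tb: "(Y i - q i) * Z i / eb i \<le> (Y i - q i) * Z i * (1 + Lam powr (sgn (Y i - q i)) * (1 - e i) / e i)"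
      if i: "i < n" for i
      using eb i assms unfolding feasT_def En_def e_def
      by (intro term_bound) auto
    have "(\<Sum>i<n. Y i * Z i / eb i) = (\<Sum>i<n. (Y i - q i) * Z i / eb i) + (\<Sum>i<n. q i * Z i / eb i)"
      by (simp add: sum.distrib[symmetric] field_simps diff_divide_distrib)
    also have "\<dots> \<le> A + B"
    proof -
      have "(\<Sum>i<n. (Y i - q i) * Z i / eb i) \<le> A" unfolding A_def
        by (intro sum_mono) (use tb in simp)
      then show ?thesis using c1 by linarith
    qed
    finally have N: "(\<Sum>i<n. Y i * Z i / eb i) \<le> A + B" .
    have R: "(A / n + B / n) / (S / n) = (A + B) / S"
    proof -
      have "real n \<noteq> 0" using False by simp
      then have "(A / n + B / n) / (S / n) = ((A + B) / n) / (S / n)" by (simp add: add_divide_distrib)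
      also have "\<dots> = (A + B) / S" using \<open>real n \<noteq> 0\<close> by simp
      finally show ?thesis .
    qed
    show ?thesis unfolding c2 R using N S0 by (simp add: divide_right_mono)
  qed
  show ?thesis
    unfolding RHS psiT_plus_def e_def[symmetric] q_def[symmetric]
    using ne bound by (intro cSup_least) auto
qed

end
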